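(* Let $\xi,\eta\in\mathbb R^3$ and suppose that the triangle formed by $\xi,\xi-\eta,\eta$ is non-degenerate in the sense that one of its three corner angles lies in $[2^{-5},\pi-2^{-5}]$, and that $|\Lambda(\zeta)|\ge2^{-5}$ for some $\zeta\in\{\xi,\xi-\eta,\eta\}$. Then $$|\bar\sigma|\sim\min\{|\xi|,|\xi-\eta|,|\eta|\}\cdot\max\{|\xi|,|\xi-\eta|,|\eta|\},$$ with absolute implicit constants.
   Context: $\Lambda(\zeta)=\zeta_3/|\zeta|$. $\bar\sigma=\xi_3\eta_h-\eta_3\xi_h\in\mathbb R^2$, where $\xi=(\xi_h,\xi_3)$, $\eta=(\eta_h,\eta_3)$. $A\sim B$ means $c^{-1}B\le A\le cB$ for an absolute constant $c$. *)

theory Defs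
  imports "HOL-Analysis.Analysis"
begin

text \<open>Lambda(zeta) = zeta_3 / |zeta| (with the HOL convention x/0 = 0).\<close>
definition Lam :: "real^3 \<Rightarrow> real" where
  "Lam z = z$3 / norm z"

definition sigma_bar :: "real^3 \<Rightarrow> real^3 \<Rightarrow> real^2" where
  "sigma_bar xi eta = vector [xi$3 * eta$1 - eta$3 * xi$1, xi$3 * eta$2 - eta$3 * xi$2]"

definition vec_angle :: "real^3 \<Rightarrow> real^3 \<Rightarrow> real" where
  "vec_angle u v = arccos ((u \<bullet> v) / (norm u * norm v))"

text \<open>The three corner angles of the triangle with vertices 0, eta, xi
  (sides xi, xi - eta, eta).\<close>
definition corner_angles :: "real^3 \<Rightarrow> real^3 \<Rightarrow> real set" where
  "corner_angles xi eta =
     {vec_angle xi eta, vec_angle (-eta) (xi - eta), vec_angle xi (xi - eta)}"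

end

theory Submission
  imports Defs
begin

lemma n3: "(norm (x::real^3))^2 = x$1^2 + x$2^2 + x$3^2"
  unfolding power2_norm_eq_inner inner_vec_def sum_3 by (simp add: power2_eq_square)
lemma i3: "(x::real^3) \<bullet> y = x$1*y$1 + x$2*y$2 + x$3*y$3"
  by (simp add: inner_vec_def sum_3)
lemma n2: "(norm (vector [a,b] :: real^2))^2 = a^2+b^2"
  unfolding power2_norm_eq_inner inner_vec_def sum_2 by (simp add: power2_eq_square)

definition crr :: "real \<Rightarrow> real \<Rightarrow> real \<Rightarrow> real \<Rightarrow> real \<Rightarrow> real \<Rightarrow> real" where
  "crr a1 a2 a3 b1 b2 b3 = (a2*b3-a3*b2)^2+(a3*b1-a1*b3)^2+(a1*b2-a2*b1)^2"

definition cr :: "real^3 \<Rightarrow> real^3 \<Rightarrow> real" where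
  "cr u v = crr (u$1) (u$2) (u$3) (v$1) (v$2) (v$3)"

lemma lagr: "((a1::real)^2+a2^2+a3^2)*(b1^2+b2^2+b3^2) - (a1*b1+a2*b2+a3*b3)^2 = crr a1 a2 a3 b1 b2 b3"
  unfolding crr_def by algebra

lemma lag: "(norm u)^2 * (norm v)^2 - (u \<bullet> v)^2 = cr u v"
  unfolding n3 i3 cr_def by (rule lagr)

lemma crr1: "crr (-b1) (-b2) (-b3) (a1-b1) (a2-b2) (a3-b3) = crr a1 a2 a3 b1 b2 b3"
  unfolding crr_def by algebra
lemma crr2: "crr a1 a2 a3 (a1-b1) (a2-b2) (a3-b3) = crr a1 a2 a3 b1 b2 b3"
  unfolding crr_def by algebra

lemma cr1: "cr (-eta) (xi - eta) = cr xi eta"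
  unfolding cr_def vector_uminus_component vector_minus_component by (rule crr1)
lemma cr2: "cr xi (xi - eta) = cr xi eta"
  unfolding cr_def vector_minus_component by (rule crr2)

lemma sig: "(norm (sigma_bar xi eta))^2 = (xi$3 * eta$1 - xi$1 * eta$3)^2 + (xi$2 * eta$3 - xi$3 * eta$2)^2"
proof -
  have "(norm (sigma_bar xi eta))^2 = (xi$3 * eta$1 - eta$3 * xi$1)^2 + (xi$3 * eta$2 - eta$3 * xi$2)^2"
    unfolding sigma_bar_def n2 by (rule refl)
  also have "... = (xi$3 * eta$1 - xi$1 * eta$3)^2 + (xi$2 * eta$3 - xi$3 * eta$2)^2"
    by algebra
  finally show ?thesis .
qed

lemma angle_bound:
  assumes "d \<le> vec_angle u v" "vec_angle u v \<le> pi - d" "0 \<le> d" "d \<le> pi/2"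
  shows "(u \<bullet> v)^2 \<le> (cos d)^2 * (norm u)^2 * (norm v)^2"
proof (cases "u = 0 \<or> v = 0")
  case True then show ?thesis by auto
next
  case False
  define x where "x = (u \<bullet> v) / (norm u * norm v)"
  have pos: "norm u * norm v > 0" using False by auto
  have "\<bar>u \<bullet> v\<bar> \<le> norm u * norm v" by (rule Cauchy_Schwarz_ineq2)
  moreover have "\<bar>x\<bar> = \<bar>u \<bullet> v\<bar> / (norm u * norm v)" unfolding x_def
    using pos by (simp add: abs_divide)
  ultimately have x1: "\<bar>x\<bar> \<le> 1" using pos by (simp add: divide_le_eq_1)
  have th: "vec_angle u v = arccos x" unfolding vec_angle_def x_def by simp
  have ar: "0 \<le> arccos x" "arccos x \<le> pi" "cos (arccos x) = x"
    using arccos[of x] x1 by auto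
  have "cos (arccos x) \<le> cos d"
    using assms th ar by (intro cos_monotone_0_pi_le) auto
  moreover have "cos (pi - d) \<le> cos (arccos x)"
    using assms th ar by (intro cos_monotone_0_pi_le) auto
  ultimately have "\<bar>x\<bar> \<le> cos d" using ar by (simp add: cos_pi_minus abs_le_iff)
  hence "\<bar>x\<bar>^2 \<le> (cos d)^2" by (intro power_mono) auto
  hence "x^2 \<le> (cos d)^2" by simp
  hence "x^2 * (norm u * norm v)^2 \<le> (cos d)^2 * (norm u * norm v)^2"
    by (rule mult_right_mono) simp
  moreover have "x * (norm u * norm v) = u \<bullet> v" unfolding x_def using pos by simp
  hence "x^2 * (norm u * norm v)^2 = (u \<bullet> v)^2" by (metis power_mult_distrib)
  ultimately show ?thesis by (simp add: power_mult_distrib mult.assoc)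
qed

lemma cs2: "((a::real)*x + b*y)^2 \<le> (a^2+b^2)*(x^2+y^2)"
proof -
  have "(a^2+b^2)*(x^2+y^2) - (a*x + b*y)^2 = (a*y - b*x)^2" by algebra
  thus ?thesis by (metis diff_ge_0_iff_ge zero_le_power2)
qed

lemma lam_bound:
  fixes z :: "real^3"
  assumes L: "\<bar>Lam z\<bar> \<ge> d" and d: "d > 0" and o: "z$1*n1 + z$2*n2 + z$3*n3 = 0"
  shows "d^2*(n1^2+n2^2+n3^2) \<le> (1+d^2)*(n1^2+n2^2)"
proof -
  have nz: "norm z > 0" using L d unfolding Lam_def
    by (metis abs_zero div_by_0 norm_ge_zero not_le order_le_less)
  have "d * norm z \<le> \<bar>z$3\<bar>" using L nz unfolding Lam_def
    by (simp add: abs_divide le_divide_eq)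
  hence "(d * norm z)^2 \<le> \<bar>z$3\<bar>^2" using d by (intro power_mono) auto
  hence z3: "d^2 * (norm z)^2 \<le> (z$3)^2" by (simp add: power_mult_distrib)
  have "(n3 * z$3)^2 = (n1 * z$1 + n2 * z$2)^2" using o by algebra
  also have "... \<le> (n1^2+n2^2)*((z$1)^2+(z$2)^2)" by (rule cs2)
  also have "... \<le> (n1^2+n2^2)*(norm z)^2" unfolding n3
    by (intro mult_left_mono) auto
  finally have A: "(n3 * z$3)^2 \<le> (n1^2+n2^2)*(norm z)^2" .
  have "n3^2 * (d^2 * (norm z)^2) \<le> n3^2 * (z$3)^2" using z3 by (intro mult_left_mono) auto
  also have "... = (n3 * z$3)^2" by (simp add: power_mult_distrib)
  finally have "(d^2 * n3^2) * (norm z)^2 \<le> (n1^2+n2^2)*(norm z)^2" using A by (simp add: ac_simps)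
  hence B: "d^2 * n3^2 \<le> n1^2+n2^2" using nz by simp
  have "d^2 \<le> 1 + d^2" by simp
  hence "d^2 * (n1^2+n2^2) \<le> (1+d^2)*(n1^2+n2^2)" by (intro mult_right_mono) auto
  thus ?thesis using B by (simp add: algebra_simps)
qed

lemma mm_up:
  fixes A B C X :: real
  assumes "0 \<le> A" "0 \<le> B" "0 \<le> C" "X \<le> (A*B)^2" "X \<le> (B*C)^2" "X \<le> (A*C)^2"
  shows "X \<le> (min A (min B C) * max A (max B C))^2"
proof -
  have "min A (min B C) * max A (max B C) = A*B \<or> min A (min B C) * max A (max B C) = B*C
     \<or> min A (min B C) * max A (max B C) = A*C"
    by (auto simp: min_def max_def)
  thus ?thesis using assms by auto
qed

lemma mm_low:
  fixes A B C :: real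
  assumes "0 \<le> A" "0 \<le> B" "0 \<le> C" "C \<le> A + B"
  shows "(min A (min B C) * max A (max B C))^2 \<le> 4 * (A^2 * B^2)"
proof -
  have m0: "0 \<le> min A (min B C)" using assms by simp
  have "min A (min B C) * max A (max B C) \<le> min A B * (A + B)"
    using assms by (intro mult_mono) auto
  also have "... \<le> 2 * (A * B)"
  proof (cases "A \<le> B")
    case True
    then have "A * A \<le> A * B" using assms by (intro mult_left_mono) auto
    then show ?thesis using True by (simp add: algebra_simps)
  next
    case False
    then have "B * B \<le> A * B" using assms by (intro mult_right_mono) auto
    then show ?thesis using False by (simp add: algebra_simps)
  qed
  finally have "(min A (min B C) * max A (max B C))^2 \<le> (2 * (A * B))^2"
    using m0 assms by (intro power_mono) auto
  thus ?thesis by (simp add: power_mult_distrib)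
qed

lemma low_gen:
  assumes "(u \<bullet> v)^2 \<le> q * (norm u)^2 * (norm v)^2" "P^2 \<le> 4 * ((norm u)^2 * (norm v)^2)" "q \<le> 1"
  shows "(1 - q) / 4 * P^2 \<le> cr u v"
proof -
  have "(1 - q) / 4 * P^2 \<le> (1 - q) * ((norm u)^2 * (norm v)^2)"
  proof -
    have "(1 - q) * P^2 \<le> (1 - q) * (4 * ((norm u)^2 * (norm v)^2))"
      using assms(2,3) by (intro mult_left_mono) auto
    thus ?thesis by simp
  qed
  also have "... \<le> cr u v"
  proof -
    have e: "(1 - q) * ((norm u)^2 * (norm v)^2) = (norm u)^2 * (norm v)^2 - q * (norm u)^2 * (norm v)^2"
      by (simp add: left_diff_distrib mult.assoc)
    show ?thesis unfolding e using assms(1) lag[of u v] by linarith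
  qed
  finally show ?thesis .
qed


lemma orth: "(a1::real)*(a2*b3-a3*b2) + a2*(a3*b1-a1*b3) + a3*(a1*b2-a2*b1) = 0"
  "(b1::real)*(a2*b3-a3*b2) + b2*(a3*b1-a1*b3) + b3*(a1*b2-a2*b1) = 0"
  "(a1-b1::real)*(a2*b3-a3*b2) + (a2-b2)*(a3*b1-a1*b3) + (a3-b3)*(a1*b2-a2*b1) = 0"
  by algebra+

theorem lemma6p2:
  shows "\<exists>c::real. c > 0 \<and>
    (\<forall>xi eta :: real^3.
       (\<exists>\<theta>\<in>corner_angles xi eta. 2 powr (-5) \<le> \<theta> \<and> \<theta> \<le> pi - 2 powr (-5)) \<and>
       (\<exists>z\<in>{xi, xi - eta, eta}. \<bar>Lam z\<bar> \<ge> 2 powr (-5)) \<longrightarrow>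
       (let m = min (norm xi) (min (norm (xi - eta)) (norm eta));
            M = max (norm xi) (max (norm (xi - eta)) (norm eta))
        in inverse c * (m * M) \<le> norm (sigma_bar xi eta) \<and>
           norm (sigma_bar xi eta) \<le> c * (m * M)))"
proof -
  define d :: real where "d = 2 powr (-5)"
  have d1: "d \<le> 2 powr 0" unfolding d_def by (rule powr_mono) auto
  have d0: "0 < d" "d \<le> pi/2" using d1 pi_gt3 unfolding d_def by auto
  define q where "q = (cos d)^2"
  have cd: "0 \<le> cos d" using d0 by (intro cos_ge_zero) auto
  have "cos d < cos 0" using d0 pi_gt3 by (intro cos_monotone_0_pi) auto
  hence cd1: "cos d < 1" by simp
  have "cos d * cos d \<le> cos d * 1" using cd cd1 by (intro mult_left_mono) auto
  hence q: "0 \<le> q" "q < 1" unfolding q_def using cd cd1 by (auto simp: power2_eq_square)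
  define K where "K = d^2/(1+d^2) * ((1-q)/4)"
  have K0: "0 < K" unfolding K_def using d0 q by (intro mult_pos_pos divide_pos_pos) (auto intro: add_pos_nonneg)
  define c where "c = max 1 (inverse (sqrt K))"
  have c1: "1 \<le> c" unfolding c_def by simp
  have ic: "inverse c \<le> sqrt K"
  proof -
    have "inverse (inverse (sqrt K)) \<le> sqrt K" by simp
    moreover have "inverse c \<le> inverse (inverse (sqrt K))" unfolding c_def using K0
      by (intro le_imp_inverse_le) auto
    ultimately show ?thesis by linarith
  qed
  have main: "inverse c * (m * M) \<le> norm (sigma_bar xi eta) \<and> norm (sigma_bar xi eta) \<le> c * (m * M)"
    if H1: "\<exists>\<theta>\<in>corner_angles xi eta. d \<le> \<theta> \<and> \<theta> \<le> pi - d"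
      and H2: "\<exists>z\<in>{xi, xi - eta, eta}. \<bar>Lam z\<bar> \<ge> d"
      and mdef: "m = min (norm xi) (min (norm (xi - eta)) (norm eta))"
      and Mdef: "M = max (norm xi) (max (norm (xi - eta)) (norm eta))"
    for xi eta :: "real^3" and m M
  proof -
    define n1 where "n1 = xi$2 * eta$3 - xi$3 * eta$2"
    define n2 where "n2 = xi$3 * eta$1 - xi$1 * eta$3"
    define n3 where "n3 = xi$1 * eta$2 - xi$2 * eta$1"
    have crn: "cr xi eta = n1^2 + n2^2 + n3^2" unfolding cr_def crr_def n1_def n2_def n3_def by simp
    have sg: "(norm (sigma_bar xi eta))^2 = n1^2 + n2^2" unfolding sig n1_def n2_def by simp
    define A where "A = norm xi"
    define B where "B = norm eta"
    define C where "C = norm (xi - eta)"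
    have ABC: "0 \<le> A" "0 \<le> B" "0 \<le> C" unfolding A_def B_def C_def by auto
    have mM: "m = min A (min C B)" "M = max A (max C B)" unfolding mdef Mdef A_def B_def C_def by auto
    have P0: "0 \<le> m * M" using ABC mM by auto
    have "cr xi eta \<le> (norm xi)^2 * (norm eta)^2"
      using lag[of xi eta] zero_le_power2[of "xi \<bullet> eta"] by linarith
    hence u1: "cr xi eta \<le> (A*B)^2" unfolding A_def B_def by (simp add: power_mult_distrib)
    have "cr xi eta \<le> (norm (-eta))^2 * (norm (xi - eta))^2"
      using lag[of "-eta" "xi - eta"] zero_le_power2[of "(-eta) \<bullet> (xi - eta)"] unfolding cr1 by linarith
    hence u2: "cr xi eta \<le> (C*B)^2" unfolding C_def B_def by (simp add: power_mult_distrib mult.commute)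
    have "cr xi eta \<le> (norm xi)^2 * (norm (xi - eta))^2"
      using lag[of xi "xi - eta"] zero_le_power2[of "xi \<bullet> (xi - eta)"] unfolding cr2 by linarith
    hence u3: "cr xi eta \<le> (A*C)^2" unfolding A_def C_def by (simp add: power_mult_distrib)
    have up: "cr xi eta \<le> (m * M)^2" unfolding mM
      using u1 u2 u3 ABC by (intro mm_up) (auto simp: ac_simps)
    have sup: "(norm (sigma_bar xi eta))^2 \<le> (m*M)^2" using up sg crn
      by (smt (verit) zero_le_power2)
    have upper: "norm (sigma_bar xi eta) \<le> c * (m * M)"
    proof -
      have "norm (sigma_bar xi eta) \<le> m * M" using sup P0 by (rule power2_le_imp_le)
      also have "... \<le> c * (m * M)" using mult_right_mono[OF c1 P0] by simp
      finally show ?thesis .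
    qed
    have lowcr: "(1 - q) / 4 * (m*M)^2 \<le> cr xi eta"
    proof -
      from H1 obtain t where t: "t \<in> corner_angles xi eta" "d \<le> t" "t \<le> pi - d" by blast
      have ql: "q \<le> 1" using q by simp
      consider "t = vec_angle xi eta" | "t = vec_angle (-eta) (xi - eta)" | "t = vec_angle xi (xi - eta)"
        using t(1) unfolding corner_angles_def by blast
      then show ?thesis
      proof cases
        case 1
        have a: "(xi \<bullet> eta)^2 \<le> q * (norm xi)^2 * (norm eta)^2" unfolding q_def
          using t d0 1 by (intro angle_bound) auto
        have "C \<le> A + B" unfolding A_def B_def C_def by (rule norm_triangle_ineq4)
        hence "(min A (min B C) * max A (max B C))^2 \<le> 4 * (A^2 * B^2)" using ABC by (intro mm_low) auto
        hence b: "(m*M)^2 \<le> 4 * ((norm xi)^2 * (norm eta)^2)" unfolding mM A_def B_def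
          by (simp add: min.assoc min.commute min.left_commute max.assoc max.commute max.left_commute)
        show ?thesis using low_gen[OF a b ql] .
      next
        case 2
        have a: "((-eta) \<bullet> (xi - eta))^2 \<le> q * (norm (-eta))^2 * (norm (xi - eta))^2" unfolding q_def
          using t d0 2 by (intro angle_bound) auto
        have "A \<le> C + B" unfolding A_def B_def C_def
          using norm_triangle_ineq[of "xi - eta" eta] by simp
        hence "(min B (min C A) * max B (max C A))^2 \<le> 4 * (B^2 * C^2)" using ABC
          by (intro mm_low) (auto simp: ac_simps)
        hence b: "(m*M)^2 \<le> 4 * ((norm (-eta))^2 * (norm (xi - eta))^2)" unfolding mM A_def B_def C_def
          by (simp add: min.assoc min.commute min.left_commute max.assoc max.commute max.left_commute)
        show ?thesis using low_gen[OF a b ql] unfolding cr1 .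
      next
        case 3
        have a: "(xi \<bullet> (xi - eta))^2 \<le> q * (norm xi)^2 * (norm (xi - eta))^2" unfolding q_def
          using t d0 3 by (intro angle_bound) auto
        have "B \<le> A + C" unfolding A_def B_def C_def
          using norm_triangle_ineq4[of xi "xi - eta"] by simp
        hence "(min A (min C B) * max A (max C B))^2 \<le> 4 * (A^2 * C^2)" using ABC
          by (intro mm_low) auto
        hence b: "(m*M)^2 \<le> 4 * ((norm xi)^2 * (norm (xi - eta))^2)" unfolding mM A_def B_def C_def
          by (simp add: min.assoc min.commute min.left_commute max.assoc max.commute max.left_commute)
        show ?thesis using low_gen[OF a b ql] unfolding cr2 .
      qed
    qed
    have lam: "d^2 * cr xi eta \<le> (1 + d^2) * (norm (sigma_bar xi eta))^2"
    proof -
      from H2 obtain z where z: "z \<in> {xi, xi - eta, eta}" "\<bar>Lam z\<bar> \<ge> d" by blast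
      have "z$1*n1 + z$2*n2 + z$3*n3 = 0"
        using z(1) unfolding n1_def n2_def n3_def
        by (auto simp: orth)
      from lam_bound[OF z(2) d0(1) this] show ?thesis unfolding crn sg .
    qed
    have "K * (m*M)^2 \<le> (norm (sigma_bar xi eta))^2"
    proof -
      have "K * (m*M)^2 = d^2/(1+d^2) * ((1-q)/4 * (m*M)^2)" unfolding K_def by simp
      also have "... \<le> d^2/(1+d^2) * cr xi eta" using lowcr by (intro mult_left_mono) auto
      also have "... \<le> (norm (sigma_bar xi eta))^2" using lam
        by (simp add: divide_le_eq add_pos_nonneg ac_simps)
      finally show ?thesis .
    qed
    hence "sqrt (K * (m*M)^2) \<le> sqrt ((norm (sigma_bar xi eta))^2)" by (rule real_sqrt_le_mono)
    hence "sqrt K * (m*M) \<le> norm (sigma_bar xi eta)" using P0 by (simp add: real_sqrt_mult)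
    moreover have "inverse c * (m*M) \<le> sqrt K * (m*M)" using ic P0 by (rule mult_right_mono)
    ultimately show ?thesis using upper by linarith
  qed
  show ?thesis
    apply (rule exI[of _ c])
    using c1 main unfolding d_def Let_def by auto
qed
end
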